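(* Let $q$ and $n$ be positive integers with $q>\lceil n/2\rceil$, and let $a_1,\dots,a_n\in\mathbb{Z}_q$ be reduced residues (i.e. $\gcd(a_i,q)=1$ for all $i$). Then the number of the $2^n$ choices $(\varepsilon_1,\dots,\varepsilon_n)\in\{0,1\}^n$ for which $\sum_{i=1}^n\varepsilon_i a_i\equiv 0\pmod q$ is at most $\binom{n}{\lfloor n/2\rfloor}$. Moreover, this bound is best possible: for all such $q,n$ there exist reduced residues $a_1,\dots,a_n$ attaining it.
   Context: $\mathbb{Z}_q$ denotes the integers modulo $q$. *)

theory Defs
  imports Complex_Main "HOL-Library.FuncSet" "HOL-Number_Theory.Cong"
begin

definition zero_sum_count :: "nat \<Rightarrow> nat \<Rightarrow> (nat \<Rightarrow> int) \<Rightarrow> nat" where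
  "zero_sum_count q n a =
     card {eps \<in> {0..<n} \<rightarrow>\<^sub>E {0::int, 1}. [(\<Sum>i<n. eps i * a i) = 0] (mod int q)}"

end

theory Submission
  imports Defs
begin

definition Wn :: "nat \<Rightarrow> nat \<Rightarrow> nat set" where
  "Wn L m = {j. L < 2*j+m \<and> 2*j \<le> L+m}"

definition Sb :: "nat \<Rightarrow> nat \<Rightarrow> nat" where
  "Sb L m = (\<Sum>j\<in>Wn L m. L choose j)"

lemma Wn_finite[simp]: "finite (Wn L m)"
  by (rule finite_subset[of _ "{..L+m}"]) (auto simp: Wn_def)

lemma Sb_big: assumes "L < m" shows "2^L \<le> Sb L m"
proof -
  have "{..L} \<subseteq> Wn L m" using assms by (auto simp: Wn_def)
  hence "(\<Sum>j\<le>L. L choose j) \<le> Sb L m" unfolding Sb_def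
    by (intro sum_mono2) auto
  thus ?thesis by (simp add: choose_row_sum)
qed

lemma Sb_one: "Sb n 1 = n choose (n div 2)"
proof -
  have "Wn n 1 = {(n+1) div 2}" by (auto simp: Wn_def)
  hence "Sb n 1 = n choose ((n+1) div 2)" by (simp add: Sb_def)
  also have "\<dots> = n choose (n - (n+1) div 2)" by (rule binomial_symmetric) auto
  also have "n - (n+1) div 2 = n div 2" by auto
  finally show ?thesis .
qed

lemma Sb_rec: assumes "0 < m" shows "Sb (Suc L) m = Sb L (m-1) + Sb L (m+1)"
proof -
  define W1 where "W1 = Wn (Suc L) m"
  define W2 where "W2 = {j. Suc j \<in> W1}"
  have f1: "finite W1" by (simp add: W1_def)
  have f2: "finite W2" unfolding W2_def W1_def
    by (rule finite_subset[of _ "{..L+m}"]) (auto simp: Wn_def)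
  have c: "Suc L choose j = (L choose j) + (if j = 0 then 0 else L choose (j - 1))" for j
    by (cases j) auto
  have "Sb (Suc L) m = (\<Sum>j\<in>W1. L choose j) + (\<Sum>j\<in>W1. if j = 0 then 0 else L choose (j - 1))"
    unfolding Sb_def W1_def c sum.distrib by simp
  also have "(\<Sum>j\<in>W1. if j = 0 then 0 else L choose (j - 1)) = (\<Sum>j\<in>W1 - {0}. L choose (j - 1))"
    by (rule sum.mono_neutral_cong_right) (use f1 in auto)
  also have "W1 - {0} = Suc ` W2" unfolding W2_def
    by (auto simp: image_iff) (metis not0_implies_Suc)
  also have "(\<Sum>j\<in>Suc ` W2. L choose (j - 1)) = (\<Sum>j\<in>W2. L choose j)"
    by (subst sum.reindex) auto
  also have "(\<Sum>j\<in>W1. L choose j) + (\<Sum>j\<in>W2. L choose j)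
      = (\<Sum>j\<in>W1 \<union> W2. L choose j) + (\<Sum>j\<in>W1 \<inter> W2. L choose j)"
    by (rule sum.union_inter[symmetric]) (use f1 f2 in auto)
  also have "W1 \<union> W2 = Wn L (m+1)" using assms unfolding W1_def W2_def Wn_def by auto
  also have "W1 \<inter> W2 = Wn L (m-1)" using assms unfolding W1_def W2_def Wn_def by auto
  finally show ?thesis by (simp add: Sb_def)
qed


definition Gc :: "int \<Rightarrow> (nat \<Rightarrow> int) \<Rightarrow> nat \<Rightarrow> int set \<Rightarrow> nat" where
  "Gc q a L A = card {S. S \<subseteq> {..<L} \<and> (\<Sum>i\<in>S. a i) mod q \<in> A}"

lemma Gc_fin: "finite {S. S \<subseteq> {..<(L::nat)} \<and> P S}"
  by (rule finite_subset[of _ "Pow {..<L}"]) auto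

lemma Gc_le: "Gc q a L A \<le> 2^L"
proof -
  have "Gc q a L A \<le> card (Pow {..<(L::nat)})" unfolding Gc_def
    by (rule card_mono) auto
  thus ?thesis by (simp add: card_Pow)
qed

lemma Gc_empty[simp]: "Gc q a L {} = 0" by (simp add: Gc_def)

lemma Gc_ui: "Gc q a L A + Gc q a L B = Gc q a L (A \<inter> B) + Gc q a L (A \<union> B)"
proof -
  have "Gc q a L A + Gc q a L B = card ({S. S \<subseteq> {..<L} \<and> (\<Sum>i\<in>S. a i) mod q \<in> A} \<union> {S. S \<subseteq> {..<L} \<and> (\<Sum>i\<in>S. a i) mod q \<in> B})
     + card ({S. S \<subseteq> {..<L} \<and> (\<Sum>i\<in>S. a i) mod q \<in> A} \<inter> {S. S \<subseteq> {..<L} \<and> (\<Sum>i\<in>S. a i) mod q \<in> B})"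
    unfolding Gc_def by (rule card_Un_Int) (rule Gc_fin)+
  also have "{S. S \<subseteq> {..<L} \<and> (\<Sum>i\<in>S. a i) mod q \<in> A} \<union> {S. S \<subseteq> {..<L} \<and> (\<Sum>i\<in>S. a i) mod q \<in> B}
     = {S. S \<subseteq> {..<L} \<and> (\<Sum>i\<in>S. a i) mod q \<in> A \<union> B}" by auto
  also have "{S. S \<subseteq> {..<L} \<and> (\<Sum>i\<in>S. a i) mod q \<in> A} \<inter> {S. S \<subseteq> {..<L} \<and> (\<Sum>i\<in>S. a i) mod q \<in> B}
     = {S. S \<subseteq> {..<L} \<and> (\<Sum>i\<in>S. a i) mod q \<in> A \<inter> B}" by auto
  finally show ?thesis unfolding Gc_def by simp
qed

lemma Gc_sum: "finite X \<Longrightarrow> Gc q a L X = (\<Sum>t\<in>X. Gc q a L {t})"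
proof (induction X rule: finite_induct)
  case empty thus ?case by simp
next
  case (insert x X)
  have "Gc q a L X + Gc q a L {x} = Gc q a L (X \<inter> {x}) + Gc q a L (X \<union> {x})" by (rule Gc_ui)
  moreover have "X \<inter> {x} = {}" using insert by auto
  ultimately have "Gc q a L (insert x X) = Gc q a L X + Gc q a L {x}" by simp
  thus ?case using insert by simp
qed

lemma Gc_Suc:
  assumes "q > 0" "A \<subseteq> {0..<q}"
  shows "Gc q a (Suc L) A = Gc q a L A + Gc q a L ((\<lambda>t. (t - a L) mod q) ` A)"
proof -
  let ?P = "\<lambda>S. (\<Sum>i\<in>S. a i) mod q \<in> A"
  have split: "{S. S \<subseteq> {..<Suc L} \<and> ?P S} = {S. S \<subseteq> {..<L} \<and> ?P S} \<union> insert L ` {S. S \<subseteq> {..<L} \<and> ?P (insert L S)}"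
  proof (intro set_eqI iffI)
    fix S assume "S \<in> {S. S \<subseteq> {..<Suc L} \<and> ?P S}"
    hence S: "S \<subseteq> {..<Suc L}" "?P S" by auto
    show "S \<in> {S. S \<subseteq> {..<L} \<and> ?P S} \<union> insert L ` {S. S \<subseteq> {..<L} \<and> ?P (insert L S)}"
    proof (cases "L \<in> S")
      case True
      hence "S = insert L (S - {L})" "S - {L} \<subseteq> {..<L}" using S by auto
      thus ?thesis using S by (metis (mono_tags, lifting) UnI2 image_eqI mem_Collect_eq)
    next
      case False thus ?thesis using S by (auto simp: less_Suc_eq)
    qed
  qed auto
  have disj: "{S. S \<subseteq> {..<L} \<and> ?P S} \<inter> insert L ` {S. S \<subseteq> {..<L} \<and> ?P (insert L S)} = {}" by auto
  have inj: "inj_on (insert L) {S. S \<subseteq> {..<L} \<and> ?P (insert L S)}"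
    unfolding inj_on_def by auto
  have eq: "{S. S \<subseteq> {..<L} \<and> ?P (insert L S)} = {S. S \<subseteq> {..<L} \<and> (\<Sum>i\<in>S. a i) mod q \<in> (\<lambda>t. (t - a L) mod q) ` A}"
  proof (intro Collect_cong conj_cong refl)
    fix S assume S: "S \<subseteq> {..<L}"
    hence fS: "finite S" by (meson finite_lessThan finite_subset)
    have "L \<notin> S" using S by auto
    hence s: "(\<Sum>i\<in>insert L S. a i) = a L + (\<Sum>i\<in>S. a i)" using fS by simp
    show "?P (insert L S) \<longleftrightarrow> (\<Sum>i\<in>S. a i) mod q \<in> (\<lambda>t. (t - a L) mod q) ` A"
    proof
      assume "?P (insert L S)"
      hence "(a L + (\<Sum>i\<in>S. a i)) mod q \<in> A" using s by simp
      moreover have "((a L + (\<Sum>i\<in>S. a i)) mod q - a L) mod q = (\<Sum>i\<in>S. a i) mod q"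
        by (metis add_diff_cancel_left' mod_diff_left_eq)
      ultimately show "(\<Sum>i\<in>S. a i) mod q \<in> (\<lambda>t. (t - a L) mod q) ` A"
        by (metis image_eqI)
    next
      assume "(\<Sum>i\<in>S. a i) mod q \<in> (\<lambda>t. (t - a L) mod q) ` A"
      then obtain t where t: "t \<in> A" "(\<Sum>i\<in>S. a i) mod q = (t - a L) mod q" by auto
      have t0: "t mod q = t" using t(1) assms by auto
      have "(a L + (\<Sum>i\<in>S. a i)) mod q = (a L + (t - a L)) mod q"
        using t(2) by (metis mod_add_right_eq)
      thus "?P (insert L S)" using s t0 t(1) by simp
    qed
  qed
  have "Gc q a (Suc L) A = card {S. S \<subseteq> {..<L} \<and> ?P S} + card (insert L ` {S. S \<subseteq> {..<L} \<and> ?P (insert L S)})"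
    unfolding Gc_def split by (rule card_Un_disjoint) (auto intro: Gc_fin disj)
  also have "card (insert L ` {S. S \<subseteq> {..<L} \<and> ?P (insert L S)}) = card {S. S \<subseteq> {..<L} \<and> ?P (insert L S)}"
    by (rule card_image[OF inj])
  finally show ?thesis unfolding Gc_def eq .
qed


lemma exch:
  fixes f :: "int \<Rightarrow> nat"
  shows "finite B2 \<Longrightarrow> B1 \<subseteq> B2 \<Longrightarrow> card B1 + card B2 = 2*m \<Longrightarrow> card B1 < m \<Longrightarrow> d = m - 1 - card B1 \<Longrightarrow>
    \<exists>C1 C2. C1 \<subseteq> B2 \<and> C2 \<subseteq> B2 \<and> card C1 = m - 1 \<and> card C2 = m + 1 \<and>
       sum f B1 + sum f B2 \<le> sum f C1 + sum f C2"
proof (induction d arbitrary: B1 B2)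
  case 0
  hence "card B1 = m - 1" "card B2 = m + 1" by linarith+
  thus ?case using 0(2) by blast
next
  case (Suc d)
  have f1: "finite B1" using finite_subset[OF Suc.prems(2) Suc.prems(1)] .
  have cd: "card (B2 - B1) = card B2 - card B1" using Suc.prems(2) f1 by (simp add: card_Diff_subset)
  hence "card (B2 - B1) \<ge> 2" using Suc.prems(3,4,5) by linarith
  then obtain x y where xy: "x \<in> B2 - B1" "y \<in> B2 - B1" "x \<noteq> y"
  proof -
    from \<open>card (B2 - B1) \<ge> 2\<close> obtain x X where "B2 - B1 = insert x X" "x \<notin> X" "1 \<le> card X" "finite X"
      by (auto simp: numeral_2_eq_2 card_le_Suc_iff)
    moreover then obtain y where "y \<in> X" by fastforce
    ultimately show ?thesis using that by blast
  qed
  obtain x' y' where xy': "x' \<in> B2 - B1" "y' \<in> B2 - B1" "x' \<noteq> y'" "f y' \<le> f x'"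
  proof (cases "f y \<le> f x")
    case True thus ?thesis using xy that by blast
  next
    case False thus ?thesis using xy that[of y x] by auto
  qed
  define B1' where "B1' = insert x' B1"
  define B2' where "B2' = B2 - {y'}"
  have c1: "card B1' = card B1 + 1" using xy' f1 by (simp add: B1'_def)
  have c2: "card B2' = card B2 - 1" using xy'(2) Suc.prems(1) by (simp add: B2'_def)
  have "B2 \<noteq> {}" using xy'(1) by blast
  hence cpos: "card B2 > 0" using Suc.prems(1) by (simp add: card_gt_0_iff)
  have s1: "sum f B1' = f x' + sum f B1" using xy' f1 by (simp add: B1'_def)
  have s2: "sum f B2 = f y' + sum f B2'" using xy'(2) Suc.prems(1)
    by (simp add: B2'_def sum.remove)
  have "\<exists>C1 C2. C1 \<subseteq> B2' \<and> C2 \<subseteq> B2' \<and> card C1 = m - 1 \<and> card C2 = m + 1 \<and>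
       sum f B1' + sum f B2' \<le> sum f C1 + sum f C2"
  proof (rule Suc.IH)
    show "finite B2'" using Suc.prems(1) by (simp add: B2'_def)
    show "B1' \<subseteq> B2'" using Suc.prems(2) xy' by (auto simp: B1'_def B2'_def)
    show "card B1' + card B2' = 2 * m" using Suc.prems(3) c1 c2 cpos by linarith
    show "card B1' < m" using Suc.prems(4,5) c1 by linarith
    show "d = m - 1 - card B1'" using Suc.prems(5) c1 by linarith
  qed
  then obtain C1 C2 where C: "C1 \<subseteq> B2'" "C2 \<subseteq> B2'" "card C1 = m - 1" "card C2 = m + 1"
       "sum f B1' + sum f B2' \<le> sum f C1 + sum f C2" by blast
  have "B2' \<subseteq> B2" by (auto simp: B2'_def)
  moreover have "sum f B1 + sum f B2 \<le> sum f C1 + sum f C2" using C(5) s1 s2 xy'(4) by linarith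
  ultimately show ?case using C(1-4) by blast
qed


lemma tr_inj: assumes "(q::int) > 0" shows "inj_on (\<lambda>t. (t - u) mod q) {0..<q}"
proof (rule inj_onI)
  fix x y assume xy: "x \<in> {0..<q}" "y \<in> {0..<q}" "(x - u) mod q = (y - u) mod q"
  have ex: "((x - u) mod q + u) mod q = x mod q" using mod_add_left_eq[of "x - u" q u] by simp
  have ey: "((y - u) mod q + u) mod q = y mod q" using mod_add_left_eq[of "y - u" q u] by simp
  have "x mod q = y mod q" using ex ey xy(3) by simp
  moreover have "x mod q = x" "y mod q = y" using xy(1,2) by simp_all
  ultimately show "x = y" by simp
qed

lemma tr_noninv:
  assumes q: "(q::int) > 0" and A: "A \<subseteq> {0..<q}" "t \<in> A" "s \<in> {0..<q}" "s \<notin> A"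
    and cop: "coprime u q"
  shows "(\<lambda>t. (t - u) mod q) ` A \<noteq> A"
proof
  assume inv: "(\<lambda>t. (t - u) mod q) ` A = A"
  have step: "x \<in> A \<Longrightarrow> (x - u) mod q \<in> A" for x using inv by blast
  have all: "(t - int k * u) mod q \<in> A" for k
  proof (induction k)
    case 0
    have "t mod q = t" using A(1,2) by auto
    thus ?case using A(2) by simp
  next
    case (Suc k)
    have "((t - int k * u) mod q - u) mod q = (t - int k * u - u) mod q" by (rule mod_diff_left_eq)
    also have "t - int k * u - u = t - int (Suc k) * u" by (simp add: algebra_simps)
    finally show ?case using step[OF Suc.IH] by simp
  qed
  obtain v where v: "[u * v = 1] (mod q)" using cong_solve_coprime_int[OF cop] by blast
  define k where "k = nat (((t - s) * v) mod q)"
  have k: "int k = ((t - s) * v) mod q" using q by (simp add: k_def)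
  have c1: "[int k = (t - s) * v] (mod q)" unfolding k cong_def by simp
  have c2: "[int k * u = (t - s) * v * u] (mod q)" by (rule cong_mult[OF c1 cong_refl])
  have e: "(t - s) * v * u = (t - s) * (u * v)" by (simp add: mult_ac)
  have c3: "[(t - s) * (u * v) = (t - s) * 1] (mod q)" by (rule cong_mult[OF cong_refl v])
  have c4: "[int k * u = t - s] (mod q)" using cong_trans[OF c2[unfolded e] c3] by simp
  have c5: "[t - int k * u = t - (t - s)] (mod q)" by (rule cong_diff[OF cong_refl c4])
  hence "(t - int k * u) mod q = s mod q" by (simp add: cong_def)
  also have "s mod q = s" using A(3) by simp
  finally show False using all[of k] A(4) by simp
qed


lemma main_ind:
  assumes q: "(q::int) > 0" and cop: "\<forall>i<n. coprime (a i) q" and nq: "int n + 1 < 2*q"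
  shows "L \<le> n \<Longrightarrow> A \<subseteq> {0..<q} \<Longrightarrow> (card A + L \<le> n + 1 \<or> card A > L) \<Longrightarrow> Gc q a L A \<le> Sb L (card A)"
proof (induction L arbitrary: A)
  case 0
  have fA: "finite A" using 0 finite_subset by blast
  show ?case
  proof (cases "card A = 0")
    case True thus ?thesis using fA by simp
  next
    case False thus ?thesis using Gc_le[of q a 0 A] Sb_big[of 0 "card A"] by simp
  qed
next
  case (Suc L)
  have fA: "finite A" using Suc.prems finite_subset by blast
  define m where "m = card A"
  show ?case
  proof (cases "m = 0 \<or> m > Suc L")
    case True thus ?thesis
    proof
      assume "m = 0" thus ?thesis using fA by (simp add: m_def)
    next
      assume "m > Suc L" thus ?thesis using Gc_le[of q a "Suc L" A] Sb_big[of "Suc L" m] by (simp add: m_def)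
    qed
  next
    case False
    hence m1: "1 \<le> m" "m + Suc L \<le> n + 1" "m \<le> Suc L" using Suc.prems by (auto simp: m_def)
    hence mq: "int m < q" using nq by linarith
    have Ln: "L < n" using m1 by linarith
    define B where "B = (\<lambda>t. (t - a L) mod q) ` A"
    have Bsub: "B \<subseteq> {0..<q}" using q by (auto simp: B_def)
    have fB: "finite B" using fA by (simp add: B_def)
    have cB: "card B = m" unfolding B_def m_def
      by (rule card_image) (rule inj_on_subset[OF tr_inj[OF q] Suc.prems(2)])
    obtain t where t: "t \<in> A" using m1 m_def by fastforce
    have "A \<noteq> {0..<q}"
    proof
      assume "A = {0..<q}"
      hence "int m = q" using q by (simp add: m_def)
      thus False using mq by simp
    qed
    then obtain s where s: "s \<in> {0..<q}" "s \<notin> A" using Suc.prems(2) by blast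
    have AB: "B \<noteq> A" unfolding B_def
      by (rule tr_noninv[OF q Suc.prems(2) t s]) (use cop Ln in auto)
    have cI: "card (A \<inter> B) < m"
    proof (rule ccontr)
      assume "\<not> card (A \<inter> B) < m"
      hence "card (A \<inter> B) = card A" using card_mono[OF fA, of "A \<inter> B"] by (auto simp: m_def)
      hence "A \<inter> B = A" using fA by (metis Int_lower1 card_subset_eq)
      hence "A \<subseteq> B" by blast
      hence "A = B" using fB cB by (simp add: card_subset_eq m_def)
      thus False using AB by simp
    qed
    have cU: "card (A \<inter> B) + card (A \<union> B) = 2*m"
      using card_Un_Int[OF fA fB] cB by (simp add: m_def)
    obtain C1 C2 where C: "C1 \<subseteq> A \<union> B" "C2 \<subseteq> A \<union> B" "card C1 = m - 1" "card C2 = m + 1"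
       "(\<Sum>t\<in>A \<inter> B. Gc q a L {t}) + (\<Sum>t\<in>A \<union> B. Gc q a L {t}) \<le> (\<Sum>t\<in>C1. Gc q a L {t}) + (\<Sum>t\<in>C2. Gc q a L {t})"
      using exch[of "A \<union> B" "A \<inter> B" m "m - 1 - card (A \<inter> B)" "\<lambda>t. Gc q a L {t}"] fA fB cI cU by auto
    have fC1: "finite C1" "finite C2" using C fA fB finite_subset by blast+
    have "Gc q a (Suc L) A = Gc q a L A + Gc q a L B"
      unfolding B_def by (rule Gc_Suc[OF q Suc.prems(2)])
    also have "\<dots> = Gc q a L (A \<inter> B) + Gc q a L (A \<union> B)" by (rule Gc_ui)
    also have "\<dots> \<le> Gc q a L C1 + Gc q a L C2"
      using C(5) Gc_sum[of "A \<inter> B" q a L] Gc_sum[of "A \<union> B" q a L] Gc_sum[of C1 q a L] Gc_sum[of C2 q a L] fA fB fC1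
      by simp
    also have "\<dots> \<le> Sb L (m - 1) + Sb L (m + 1)"
    proof (intro add_mono)
      have s1: "C1 \<subseteq> {0..<q}" "C2 \<subseteq> {0..<q}" using C(1,2) Suc.prems(2) Bsub by blast+
      show "Gc q a L C1 \<le> Sb L (m - 1)"
      proof -
        have "card C1 + L \<le> n + 1" using C(3) m1 by linarith
        thus ?thesis using Suc.IH[OF _ s1(1)] C(3) Ln by simp
      qed
      show "Gc q a L C2 \<le> Sb L (m + 1)"
      proof -
        have "card C2 + L \<le> n + 1" using C(4) m1 by linarith
        thus ?thesis using Suc.IH[OF _ s1(2)] C(4) Ln by simp
      qed
    qed
    also have "\<dots> = Sb (Suc L) m" using m1 by (simp add: Sb_rec)
    finally show ?thesis by (simp add: m_def)
  qed
qed


lemma count_eq: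
  fixes n :: nat and a :: "nat \<Rightarrow> int"
  shows "card {eps \<in> {0..<n} \<rightarrow>\<^sub>E {0::int, 1}. P (\<Sum>i<n. eps i * a i)} = card {S. S \<subseteq> {..<n} \<and> P (\<Sum>i\<in>S. a i)}"
proof (rule bij_betw_same_card)
  define f where "f = (\<lambda>eps. {i. i < n \<and> eps i = (1::int)})"
  define g where "g = (\<lambda>S i. if i < n then (if i \<in> S then 1::int else 0) else undefined)"
  define X where "X = {eps \<in> {0..<n} \<rightarrow>\<^sub>E {0::int, 1}. P (\<Sum>i<n. eps i * a i)}"
  define Y where "Y = {S. S \<subseteq> {..<n} \<and> P (\<Sum>i\<in>S. a i)}"
  have sumeq: "(\<Sum>i<n. eps i * a i) = (\<Sum>i\<in>f eps. a i)" if "eps \<in> {0..<n} \<rightarrow>\<^sub>E {0::int, 1}" for eps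
  proof -
    have "(\<Sum>i<n. eps i * a i) = (\<Sum>i<n. if eps i = 1 then a i else 0)"
    proof (rule sum.cong)
      fix i assume "i \<in> {..<n}"
      hence "eps i \<in> {0, 1}" using PiE_mem[OF that, of i] by simp
      thus "eps i * a i = (if eps i = 1 then a i else 0)" by auto
    qed simp
    also have "\<dots> = (\<Sum>i\<in>{i \<in> {..<n}. eps i = 1}. a i)" by (rule sum.inter_filter[symmetric]) simp
    also have "{i \<in> {..<n}. eps i = 1} = f eps" unfolding f_def by auto
    finally show ?thesis .
  qed
  have fg: "f (g S) = S" if "S \<subseteq> {..<n}" for S
  proof (rule set_eqI)
    fix i show "i \<in> f (g S) \<longleftrightarrow> i \<in> S" using that unfolding f_def g_def by auto
  qed
  have gPi: "g S \<in> {0..<n} \<rightarrow>\<^sub>E {0::int, 1}" for S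
    unfolding g_def by (rule PiE_I) auto
  have gf: "g (f eps) = eps" if "eps \<in> {0..<n} \<rightarrow>\<^sub>E {0::int, 1}" for eps
  proof (rule ext)
    fix i show "g (f eps) i = eps i"
    proof (cases "i < n")
      case True
      hence "eps i \<in> {0, 1}" using PiE_mem[OF that, of i] by simp
      thus ?thesis using True unfolding f_def g_def by auto
    next
      case False
      hence "eps i = undefined" using PiE_arb[OF that, of i] by simp
      thus ?thesis using False unfolding g_def by simp
    qed
  qed
  have "bij_betw f X Y"
  proof (rule bij_betw_byWitness[where f' = g])
    show "\<forall>eps\<in>X. g (f eps) = eps" using gf unfolding X_def by blast
    show "\<forall>S\<in>Y. f (g S) = S" using fg unfolding Y_def by blast
    show "f ` X \<subseteq> Y"
    proof
      fix S assume "S \<in> f ` X"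
      then obtain eps where e: "eps \<in> {0..<n} \<rightarrow>\<^sub>E {0::int, 1}" "P (\<Sum>i<n. eps i * a i)" "S = f eps"
        unfolding X_def by blast
      have "S \<subseteq> {..<n}" using e(3) unfolding f_def by blast
      moreover have "P (\<Sum>i\<in>S. a i)" using e(2) sumeq[OF e(1)] e(3) by simp
      ultimately show "S \<in> Y" unfolding Y_def by blast
    qed
    show "g ` Y \<subseteq> X"
    proof
      fix e assume "e \<in> g ` Y"
      then obtain S where S: "S \<subseteq> {..<n}" "P (\<Sum>i\<in>S. a i)" "e = g S" unfolding Y_def by blast
      have "P (\<Sum>i<n. e i * a i)" using sumeq[OF gPi[of S]] fg[OF S(1)] S by simp
      thus "e \<in> X" unfolding X_def using gPi S(3) by blast
    qed
  qed
  thus "bij_betw f {eps \<in> {0..<n} \<rightarrow>\<^sub>E {0::int, 1}. P (\<Sum>i<n. eps i * a i)} {S. S \<subseteq> {..<n} \<and> P (\<Sum>i\<in>S. a i)}"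
    unfolding X_def Y_def .
qed


lemma zsc_eq: "zero_sum_count q n a = Gc (int q) a n {0}"
proof -
  have "zero_sum_count q n a = card {S. S \<subseteq> {..<n} \<and> [(\<Sum>i\<in>S. a i) = 0] (mod int q)}"
    unfolding zero_sum_count_def by (rule count_eq)
  also have "\<dots> = Gc (int q) a n {0}" unfolding Gc_def by (simp add: cong_def)
  finally show ?thesis .
qed

lemma cond_conv: assumes "int q > \<lceil>real n / 2\<rceil>" shows "int n + 1 < 2 * int q"
proof -
  have a: "real n / 2 \<le> of_int \<lceil>real n / 2\<rceil>" by (rule le_of_int_ceiling)
  have b: "\<lceil>real n / 2\<rceil> + 1 \<le> int q" using assms by linarith
  hence "of_int (\<lceil>real n / 2\<rceil> + 1) \<le> (of_int (int q) :: real)" by (rule of_int_le_iff[THEN iffD2])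
  hence "real n / 2 + 1 \<le> real q" using a by linarith
  hence "real n + 2 \<le> 2 * real q" by simp
  hence "n + 2 \<le> 2 * q" by linarith
  thus ?thesis by linarith
qed

lemma exist_part:
  fixes q n :: nat
  assumes nq: "int n + 1 < 2 * int q" and n: "n > 0"
  defines "p \<equiv> (n + 1) div 2"
  defines "a \<equiv> (\<lambda>i::nat. if i < p then 1 else int q - 1)"
  shows "(\<forall>i<n. a i \<in> {0..<int q} \<and> coprime (a i) (int q)) \<and> zero_sum_count q n a = n choose (n div 2)"
proof
  have q2: "q \<ge> 2" using nq n by linarith
  show "\<forall>i<n. a i \<in> {0..<int q} \<and> coprime (a i) (int q)"
  proof (intro allI impI)
    fix i assume "i < n"
    have "coprime (int q - 1) (int q)"
      by (metis add.commute coprime_diff_one_left diff_add_cancel)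
    thus "a i \<in> {0..<int q} \<and> coprime (a i) (int q)" using q2 by (auto simp: a_def)
  qed
  define P where "P = {..<p}"
  define N where "N = {p..<n}"
  define \<phi> where "\<phi> = (\<lambda>S. (S \<inter> P) \<union> (N - S))"
  have cN: "card N = n div 2" by (simp add: N_def p_def)
  have key: "[(\<Sum>i\<in>S. a i) = 0] (mod int q) \<longleftrightarrow> card (\<phi> S) = n div 2" if S: "S \<subseteq> {..<n}" for S
  proof -
    have fS: "finite S" using S finite_subset by blast
    have Sdisj: "S = (S \<inter> P) \<union> (S \<inter> N)" "(S \<inter> P) \<inter> (S \<inter> N) = {}" using S by (auto simp: P_def N_def)
    have u: "sum a ((S \<inter> P) \<union> (S \<inter> N)) = (\<Sum>i\<in>S \<inter> P. a i) + (\<Sum>i\<in>S \<inter> N. a i)"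
      by (rule sum.union_disjoint) (use fS Sdisj(2) in auto)
    have "(\<Sum>i\<in>S. a i) = (\<Sum>i\<in>S \<inter> P. a i) + (\<Sum>i\<in>S \<inter> N. a i)"
      using u Sdisj(1) by simp
    also have "(\<Sum>i\<in>S \<inter> P. a i) = int (card (S \<inter> P))" by (simp add: a_def P_def)
    also have "(\<Sum>i\<in>S \<inter> N. a i) = (int q - 1) * int (card (S \<inter> N))" by (simp add: a_def N_def)
    finally have sum: "(\<Sum>i\<in>S. a i) = int (card (S \<inter> P)) + (int q - 1) * int (card (S \<inter> N))" .
    have "card (\<phi> S) = card (S \<inter> P) + card (N - S)"
      unfolding \<phi>_def by (rule card_Un_disjoint) (auto simp: P_def N_def)
    moreover have "card (N - S) = card N - card (S \<inter> N)"
    proof -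
      have "N - S = N - (S \<inter> N)" by auto
      moreover have "finite (S \<inter> N)" by (simp add: N_def)
      ultimately show ?thesis by (simp add: card_Diff_subset)
    qed
    moreover have "card (S \<inter> N) \<le> card N" by (rule card_mono) (auto simp: N_def)
    ultimately have cphi: "int (card (\<phi> S)) = int (card (S \<inter> P)) + int (n div 2) - int (card (S \<inter> N))"
      using cN by simp
    have cP: "card (S \<inter> P) \<le> p" using card_mono[of P "S \<inter> P"] by (auto simp: P_def)
    have cSN: "card (S \<inter> N) \<le> n div 2" using card_mono[of N "S \<inter> N"] cN by (auto simp: N_def)
    have diff: "(\<Sum>i\<in>S. a i) - (int (card (\<phi> S)) - int (n div 2)) = int q * int (card (S \<inter> N))"
      using sum cphi by (simp add: algebra_simps)
    have "[(\<Sum>i\<in>S. a i) = 0] (mod int q) \<longleftrightarrow> [int (card (\<phi> S)) - int (n div 2) = 0] (mod int q)"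
    proof -
      have "[(\<Sum>i\<in>S. a i) = int (card (\<phi> S)) - int (n div 2)] (mod int q)"
        unfolding cong_iff_dvd_diff diff by simp
      thus ?thesis unfolding cong_def by simp
    qed
    also have "\<dots> \<longleftrightarrow> int q dvd (int (card (\<phi> S)) - int (n div 2))" by (simp add: cong_0_iff)
    also have "\<dots> \<longleftrightarrow> int (card (\<phi> S)) - int (n div 2) = 0"
    proof
      assume d: "int q dvd (int (card (\<phi> S)) - int (n div 2))"
      have b1: "int (card (\<phi> S)) - int (n div 2) < int q" using cphi cP nq p_def by linarith
      have b2: "int (card (\<phi> S)) - int (n div 2) > - int q" using cphi cSN nq by linarith
      show "int (card (\<phi> S)) - int (n div 2) = 0"
      proof (rule ccontr)
        assume ne: "int (card (\<phi> S)) - int (n div 2) \<noteq> 0"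
        from d obtain k where k: "int (card (\<phi> S)) - int (n div 2) = int q * k" by blast
        have "k \<noteq> 0" using ne k by auto
        hence "k \<ge> 1 \<or> k \<le> -1" by linarith
        thus False
        proof
          assume "k \<ge> 1" hence "int q * k \<ge> int q * 1" by (intro mult_left_mono) auto
          thus False using b1 k by simp
        next
          assume "k \<le> -1" hence "int q * k \<le> int q * (-1)" by (intro mult_left_mono) auto
          thus False using b2 k by simp
        qed
      qed
    qed simp
    finally show ?thesis by simp
  qed
  have inv: "\<phi> (\<phi> S) = S" if "S \<subseteq> {..<n}" for S
    using that unfolding \<phi>_def P_def N_def by auto
  have phisub: "\<phi> S \<subseteq> {..<n}" if "S \<subseteq> {..<n}" for S
    using that unfolding \<phi>_def P_def N_def p_def by auto
  have "zero_sum_count q n a = card {S. S \<subseteq> {..<n} \<and> [(\<Sum>i\<in>S. a i) = 0] (mod int q)}"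
    unfolding zero_sum_count_def by (rule count_eq)
  also have "{S. S \<subseteq> {..<n} \<and> [(\<Sum>i\<in>S. a i) = 0] (mod int q)} = {S. S \<subseteq> {..<n} \<and> card (\<phi> S) = n div 2}"
  proof (rule Collect_cong)
    fix S show "(S \<subseteq> {..<n} \<and> [(\<Sum>i\<in>S. a i) = 0] (mod int q)) = (S \<subseteq> {..<n} \<and> card (\<phi> S) = n div 2)"
      using key[of S] by blast
  qed
  also have "\<dots> = \<phi> ` {T. T \<subseteq> {..<n} \<and> card T = n div 2}"
  proof (intro set_eqI iffI)
    fix S assume a1: "S \<in> {S. S \<subseteq> {..<n} \<and> card (\<phi> S) = n div 2}"
    show "S \<in> \<phi> ` {T. T \<subseteq> {..<n} \<and> card T = n div 2}"
    proof -
      from a1 have S1: "S \<subseteq> {..<n}" "card (\<phi> S) = n div 2" by auto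
      have "S = \<phi> (\<phi> S)" "\<phi> S \<in> {T. T \<subseteq> {..<n} \<and> card T = n div 2}"
        using inv[OF S1(1)] phisub[OF S1(1)] S1(2) by auto
      thus ?thesis by (rule image_eqI)
    qed
  next
    fix S assume "S \<in> \<phi> ` {T. T \<subseteq> {..<n} \<and> card T = n div 2}"
    then obtain T where T: "T \<subseteq> {..<n}" "card T = n div 2" "S = \<phi> T" by blast
    have "\<phi> S = T" using inv[OF T(1)] T(3) by simp
    thus "S \<in> {S. S \<subseteq> {..<n} \<and> card (\<phi> S) = n div 2}" using phisub[OF T(1)] T by simp
  qed
  also have "card \<dots> = card {T. T \<subseteq> {..<n} \<and> card T = n div 2}"
  proof (rule card_image, rule inj_onI)
    fix x y assume "x \<in> {T. T \<subseteq> {..<n} \<and> card T = n div 2}" "y \<in> {T. T \<subseteq> {..<n} \<and> card T = n div 2}" "\<phi> x = \<phi> y"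
    hence "\<phi> (\<phi> x) = \<phi> (\<phi> y)" "x \<subseteq> {..<n}" "y \<subseteq> {..<n}" by auto
    thus "x = y" using inv by simp
  qed
  also have "\<dots> = n choose (n div 2)" using n_subsets[of "{..<n}" "n div 2"] by simp
  finally show "zero_sum_count q n a = n choose (n div 2)" .
qed

theorem corollary1:
  fixes q n :: nat
  assumes "q > 0" and "n > 0" and "int q > \<lceil>real n / 2\<rceil>"
  shows "(\<forall>a :: nat \<Rightarrow> int.
            (\<forall>i<n. a i \<in> {0..<int q} \<and> coprime (a i) (int q)) \<longrightarrow>
            zero_sum_count q n a \<le> n choose (n div 2))
       \<and> (\<exists>a :: nat \<Rightarrow> int.
            (\<forall>i<n. a i \<in> {0..<int q} \<and> coprime (a i) (int q)) \<and>
            zero_sum_count q n a = n choose (n div 2))"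
proof
  have nq: "int n + 1 < 2 * int q" using cond_conv[OF assms(3)] .
  show "\<forall>a :: nat \<Rightarrow> int.
            (\<forall>i<n. a i \<in> {0..<int q} \<and> coprime (a i) (int q)) \<longrightarrow>
            zero_sum_count q n a \<le> n choose (n div 2)"
  proof (intro allI impI)
    fix a :: "nat \<Rightarrow> int" assume h: "\<forall>i<n. a i \<in> {0..<int q} \<and> coprime (a i) (int q)"
    have "Gc (int q) a n {0} \<le> Sb n (card {0::int})"
    proof (rule main_ind[of "int q" n a])
      show "0 < int q" using assms(1) by simp
      show "\<forall>i<n. coprime (a i) (int q)" using h by blast
      show "int n + 1 < 2 * int q" by (rule nq)
      show "n \<le> n" by simp
      show "{0} \<subseteq> {0..<int q}" using assms(1) by simp
      show "card {0::int} + n \<le> n + 1 \<or> n < card {0::int}" by simp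
    qed
    thus "zero_sum_count q n a \<le> n choose (n div 2)" using Sb_one[of n] by (simp add: zsc_eq)
  qed
  show "\<exists>a :: nat \<Rightarrow> int.
            (\<forall>i<n. a i \<in> {0..<int q} \<and> coprime (a i) (int q)) \<and>
            zero_sum_count q n a = n choose (n div 2)"
    by (rule exI, rule exist_part[OF nq assms(2)])
qed

end
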